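(* Let $G$ be a compact Hausdorff group acting (strongly continuously) on a unital $C^*$-algebra $A$, and suppose there is a unital $*$-homomorphism $\psi:A\to A\circledast C(G)$ that is equivariant for the given action on $A$ and the diagonal action on $A\circledast C(G)$. Then for every $n\in\mathbb{Z}^+$ there is a unital $G$-equivariant $*$-homomorphism $\psi_n:A\to C(G^{*n})$, where $C(G^{*n})$ carries the action induced by the diagonal action of $G$ on the $n$-fold iterated join $G^{*n}$.
   Context: For a unital $C^*$-algebra $A$ with a $G$-action $\alpha$, $A\circledast C(G)=\{f\in C([0,1],A\otimes C(G)): f(0)\in\mathbb{C}1_A\otimes C(G),\ f(1)\in A\otimes\mathbb{C}1\}$ with diagonal action $(g\cdot f)(t)=(\alpha_g\otimes\rho_g)(f(t))$, $\rho_g$ being right translation on $C(G)$. The topological join of compact spaces $X,Y$ is $X*Y=[0,1]\times X\times Y/\sim$ where $(0,x_0,y)\sim(0,x_1,y)$ and $(1,x,y_0)\sim(1,x,y_1)$ for all $x_i\in X$, $y_i\in Y$. The iterated join is $G^{*1}=G$, $G^{*(n+1)}=G*G^{*n}$, with $G$ acting diagonally (by right multiplication on each copy of $G$, trivially on the join parameters); $C(G^{*n})$ carries the induced action. *)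

theory Defs
  imports "HOL-Analysis.Analysis"
begin

record 'a cstar_alg =
  cs_carrier :: "'a set"
  cs_zero :: 'a
  cs_one :: 'a
  cs_add :: "'a \<Rightarrow> 'a \<Rightarrow> 'a"
  cs_mult :: "'a \<Rightarrow> 'a \<Rightarrow> 'a"
  cs_smult :: "complex \<Rightarrow> 'a \<Rightarrow> 'a"
  cs_star :: "'a \<Rightarrow> 'a"
  cs_norm :: "'a \<Rightarrow> real"

definition cs_diff :: "'a cstar_alg \<Rightarrow> 'a \<Rightarrow> 'a \<Rightarrow> 'a" where
  "cs_diff A a b = cs_add A a (cs_smult A (-1) b)"

definition cs_closed :: "'a cstar_alg \<Rightarrow> bool" where
  "cs_closed A \<longleftrightarrow> (let C = cs_carrier A in
     cs_zero A \<in> C \<and> cs_one A \<in> C \<and>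
     (\<forall>a\<in>C. \<forall>b\<in>C. cs_add A a b \<in> C \<and> cs_mult A a b \<in> C) \<and>
     (\<forall>c. \<forall>a\<in>C. cs_smult A c a \<in> C) \<and> (\<forall>a\<in>C. cs_star A a \<in> C))"

definition cs_vector_space :: "'a cstar_alg \<Rightarrow> bool" where
  "cs_vector_space A \<longleftrightarrow> (let C = cs_carrier A; add = cs_add A; sm = cs_smult A in
     (\<forall>a\<in>C. \<forall>b\<in>C. \<forall>c\<in>C. add (add a b) c = add a (add b c)) \<and>
     (\<forall>a\<in>C. \<forall>b\<in>C. add a b = add b a) \<and>
     (\<forall>a\<in>C. add a (cs_zero A) = a) \<and>
     (\<forall>a\<in>C. add a (sm (-1) a) = cs_zero A) \<and>
     (\<forall>a\<in>C. sm 1 a = a) \<and>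
     (\<forall>c d. \<forall>a\<in>C. sm c (sm d a) = sm (c * d) a) \<and>
     (\<forall>c d. \<forall>a\<in>C. sm (c + d) a = add (sm c a) (sm d a)) \<and>
     (\<forall>c. \<forall>a\<in>C. \<forall>b\<in>C. sm c (add a b) = add (sm c a) (sm c b)))"

definition cs_unital_algebra :: "'a cstar_alg \<Rightarrow> bool" where
  "cs_unital_algebra A \<longleftrightarrow> (let C = cs_carrier A; add = cs_add A; mul = cs_mult A; sm = cs_smult A in
     (\<forall>a\<in>C. \<forall>b\<in>C. \<forall>c\<in>C. mul (mul a b) c = mul a (mul b c)) \<and>
     (\<forall>a\<in>C. \<forall>b\<in>C. \<forall>c\<in>C. mul a (add b c) = add (mul a b) (mul a c)) \<and>
     (\<forall>a\<in>C. \<forall>b\<in>C. \<forall>c\<in>C. mul (add a b) c = add (mul a c) (mul b c)) \<and>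
     (\<forall>k. \<forall>a\<in>C. \<forall>b\<in>C. mul (sm k a) b = sm k (mul a b) \<and> mul a (sm k b) = sm k (mul a b)) \<and>
     (\<forall>a\<in>C. mul (cs_one A) a = a \<and> mul a (cs_one A) = a))"

definition cs_involution :: "'a cstar_alg \<Rightarrow> bool" where
  "cs_involution A \<longleftrightarrow> (let C = cs_carrier A; st = cs_star A in
     (\<forall>a\<in>C. st (st a) = a) \<and>
     (\<forall>a\<in>C. \<forall>b\<in>C. st (cs_add A a b) = cs_add A (st a) (st b)) \<and>
     (\<forall>k. \<forall>a\<in>C. st (cs_smult A k a) = cs_smult A (cnj k) (st a)) \<and>
     (\<forall>a\<in>C. \<forall>b\<in>C. st (cs_mult A a b) = cs_mult A (st b) (st a)))"

definition cs_cstar_norm :: "'a cstar_alg \<Rightarrow> bool" where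
  "cs_cstar_norm A \<longleftrightarrow> (let C = cs_carrier A; nm = cs_norm A in
     (\<forall>a\<in>C. 0 \<le> nm a) \<and>
     (\<forall>a\<in>C. nm a = 0 \<longleftrightarrow> a = cs_zero A) \<and>
     (\<forall>k. \<forall>a\<in>C. nm (cs_smult A k a) = cmod k * nm a) \<and>
     (\<forall>a\<in>C. \<forall>b\<in>C. nm (cs_add A a b) \<le> nm a + nm b) \<and>
     (\<forall>a\<in>C. \<forall>b\<in>C. nm (cs_mult A a b) \<le> nm a * nm b) \<and>
     (\<forall>a\<in>C. nm (cs_mult A (cs_star A a) a) = (nm a)\<^sup>2) \<and>
     (\<forall>X::nat \<Rightarrow> 'a. (\<forall>n. X n \<in> C) \<and>
          (\<forall>e>0. \<exists>N. \<forall>m\<ge>N. \<forall>n\<ge>N. nm (cs_diff A (X m) (X n)) < e) \<longrightarrow>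
          (\<exists>L\<in>C. \<forall>e>0. \<exists>N. \<forall>n\<ge>N. nm (cs_diff A (X n) L) < e)))"

definition unital_cstar_alg :: "'a cstar_alg \<Rightarrow> bool" where
  "unital_cstar_alg A \<longleftrightarrow> cs_closed A \<and> cs_vector_space A \<and> cs_unital_algebra A \<and>
     cs_involution A \<and> cs_cstar_norm A \<and> cs_one A \<noteq> cs_zero A"

definition unital_star_hom :: "'a cstar_alg \<Rightarrow> 'b cstar_alg \<Rightarrow> ('a \<Rightarrow> 'b) \<Rightarrow> bool" where
  "unital_star_hom A B f \<longleftrightarrow> (let C = cs_carrier A in
     (\<forall>a\<in>C. f a \<in> cs_carrier B) \<and>
     (\<forall>a\<in>C. \<forall>b\<in>C. f (cs_add A a b) = cs_add B (f a) (f b)) \<and>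
     (\<forall>a\<in>C. \<forall>b\<in>C. f (cs_mult A a b) = cs_mult B (f a) (f b)) \<and>
     (\<forall>k. \<forall>a\<in>C. f (cs_smult A k a) = cs_smult B k (f a)) \<and>
     (\<forall>a\<in>C. f (cs_star A a) = cs_star B (f a)) \<and>
     f (cs_one A) = cs_one B)"

definition cs_continuous_on :: "'a cstar_alg \<Rightarrow> 'x::topological_space set \<Rightarrow> ('x \<Rightarrow> 'a) \<Rightarrow> bool" where
  "cs_continuous_on A S F \<longleftrightarrow>
     (\<forall>x\<in>S. \<forall>e>0. eventually (\<lambda>y. cs_norm A (cs_diff A (F y) (F x)) < e) (at x within S))"

text \<open>A strongly continuous action of the (additively written, not necessarily
 commutative) topological group 'g on A by unital *-automorphisms: g acts by alpha g.\<close>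
definition cstar_action :: "'a cstar_alg \<Rightarrow> ('g::topological_group_add \<Rightarrow> 'a \<Rightarrow> 'a) \<Rightarrow> bool" where
  "cstar_action A \<alpha> \<longleftrightarrow>
     (\<forall>g. unital_star_hom A A (\<alpha> g)) \<and>
     (\<forall>a\<in>cs_carrier A. \<alpha> 0 a = a) \<and>
     (\<forall>g h. \<forall>a\<in>cs_carrier A. \<alpha> (g + h) a = \<alpha> g (\<alpha> h a)) \<and>
     (\<forall>a\<in>cs_carrier A. cs_continuous_on A UNIV (\<lambda>g. \<alpha> g a))"

text \<open>Using A \<otimes> C(G) = C(G,A), an element of C([0,1], A \<otimes> C(G)) is a jointly
 continuous map f : [0,1] \<times> G \<rightarrow> A, written curried as f t g; algebra operations
 are pointwise.\<close>
definition join_alg_mem :: "'a cstar_alg \<Rightarrow> (real \<Rightarrow> 'g::topological_space \<Rightarrow> 'a) \<Rightarrow> bool" where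
  "join_alg_mem A f \<longleftrightarrow>
     (\<forall>t\<in>{0..1}. \<forall>g. f t g \<in> cs_carrier A) \<and>
     cs_continuous_on A ({0..1} \<times> UNIV) (\<lambda>(t, g). f t g) \<and>
     (\<forall>g. \<exists>c. f 0 g = cs_smult A c (cs_one A)) \<and>
     (\<forall>g h. f 1 g = f 1 h)"

definition equivariant_join_hom ::
  "'a cstar_alg \<Rightarrow> ('g::topological_group_add \<Rightarrow> 'a \<Rightarrow> 'a) \<Rightarrow> ('a \<Rightarrow> real \<Rightarrow> 'g \<Rightarrow> 'a) \<Rightarrow> bool" where
  "equivariant_join_hom A \<alpha> \<psi> \<longleftrightarrow> (let C = cs_carrier A in
     (\<forall>a\<in>C. join_alg_mem A (\<psi> a)) \<and>
     (\<forall>t\<in>{0..1}. \<forall>g.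
        (\<forall>a\<in>C. \<forall>b\<in>C. \<psi> (cs_add A a b) t g = cs_add A (\<psi> a t g) (\<psi> b t g)) \<and>
        (\<forall>a\<in>C. \<forall>b\<in>C. \<psi> (cs_mult A a b) t g = cs_mult A (\<psi> a t g) (\<psi> b t g)) \<and>
        (\<forall>k. \<forall>a\<in>C. \<psi> (cs_smult A k a) t g = cs_smult A k (\<psi> a t g)) \<and>
        (\<forall>a\<in>C. \<psi> (cs_star A a) t g = cs_star A (\<psi> a t g)) \<and>
        \<psi> (cs_one A) t g = cs_one A) \<and>
     (\<forall>h. \<forall>a\<in>C. \<forall>t\<in>{0..1}. \<forall>g. \<psi> (\<alpha> h a) t g = \<alpha> h (\<psi> a t (g + h))))"

text \<open>G^{*1} = G, G^{*(k+1)} = G * G^{*k} = ([0,1] \<times> G \<times> G^{*k})/\<sim>. A point of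
 G^{*n} is represented by (t, g) with t 0, ..., t (n-2) in [0,1] and g 0, ..., g (n-1)
 in G, read as (t 0, g 0, (t 1, g 1, ( ... (t (n-2), g (n-2), g (n-1))))).
 Coordinates outside the range are normalised to 0.\<close>
definition join_reps :: "nat \<Rightarrow> ((nat \<Rightarrow> real) \<times> (nat \<Rightarrow> 'g::zero)) set" where
  "join_reps n = {(t, g). (\<forall>i. i < n - 1 \<longrightarrow> t i \<in> {0..1}) \<and> (\<forall>i. n - 1 \<le> i \<longrightarrow> t i = 0)
                        \<and> (\<forall>i. n \<le> i \<longrightarrow> g i = 0)}"

text \<open>Elementary identifications generating the equivalence relation of the iterated
 join: at level k, if t k = 0 the coordinate g k is collapsed; if t k = 1 the whole
 inner join (all coordinates with index > k) is collapsed.\<close>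
definition join_move :: "nat \<Rightarrow> ((nat \<Rightarrow> real) \<times> (nat \<Rightarrow> 'g::zero)) \<Rightarrow> ((nat \<Rightarrow> real) \<times> (nat \<Rightarrow> 'g)) \<Rightarrow> bool" where
  "join_move n x y \<longleftrightarrow> x \<in> join_reps n \<and> y \<in> join_reps n \<and>
     (\<exists>k < n - 1.
        (fst x = fst y \<and> fst x k = 0 \<and> (\<forall>i. i \<noteq> k \<longrightarrow> snd x i = snd y i)) \<or>
        (fst x k = 1 \<and> fst y k = 1 \<and> (\<forall>i\<le>k. fst x i = fst y i \<and> snd x i = snd y i)))"

text \<open>C(G^{*n}): continuous complex functions on the representative space that are
 constant on the classes of the join relation (= continuous functions on the quotient).\<close>
definition C_join :: "nat \<Rightarrow> (((nat \<Rightarrow> real) \<times> (nat \<Rightarrow> 'g::{zero,topological_space})) \<Rightarrow> complex) \<Rightarrow> bool" where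
  "C_join n F \<longleftrightarrow> continuous_on (join_reps n) F \<and> (\<forall>x y. join_move n x y \<longrightarrow> F x = F y)"

definition join_act :: "nat \<Rightarrow> 'g::plus \<Rightarrow> ((nat \<Rightarrow> real) \<times> (nat \<Rightarrow> 'g)) \<Rightarrow> ((nat \<Rightarrow> real) \<times> (nat \<Rightarrow> 'g))" where
  "join_act n h x = (fst x, \<lambda>i. if i < n then snd x i + h else snd x i)"

definition equivariant_join_power_hom ::
  "'a cstar_alg \<Rightarrow> ('g::{topological_group_add} \<Rightarrow> 'a \<Rightarrow> 'a) \<Rightarrow> nat \<Rightarrow>
   ('a \<Rightarrow> ((nat \<Rightarrow> real) \<times> (nat \<Rightarrow> 'g)) \<Rightarrow> complex) \<Rightarrow> bool" where
  "equivariant_join_power_hom A \<alpha> n \<phi> \<longleftrightarrow> (let C = cs_carrier A in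
     (\<forall>a\<in>C. C_join n (\<phi> a)) \<and>
     (\<forall>x\<in>join_reps n.
        (\<forall>a\<in>C. \<forall>b\<in>C. \<phi> (cs_add A a b) x = \<phi> a x + \<phi> b x) \<and>
        (\<forall>a\<in>C. \<forall>b\<in>C. \<phi> (cs_mult A a b) x = \<phi> a x * \<phi> b x) \<and>
        (\<forall>k. \<forall>a\<in>C. \<phi> (cs_smult A k a) x = k * \<phi> a x) \<and>
        (\<forall>a\<in>C. \<phi> (cs_star A a) x = cnj (\<phi> a x)) \<and>
        \<phi> (cs_one A) x = 1) \<and>
     (\<forall>h. \<forall>a\<in>C. \<forall>x\<in>join_reps n. \<phi> (\<alpha> h a) x = \<phi> a (join_act n h x)))"

end

theory Submission
  imports Defs
begin

locale ucs =
  fixes A :: "'a cstar_alg"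
  assumes U: "unital_cstar_alg A"
begin

abbreviation "C \<equiv> cs_carrier A"
abbreviation "ad \<equiv> cs_add A"
abbreviation "mu \<equiv> cs_mult A"
abbreviation "sm \<equiv> cs_smult A"
abbreviation "st \<equiv> cs_star A"
abbreviation "nm \<equiv> cs_norm A"
abbreviation "z \<equiv> cs_zero A"
abbreviation "e1 \<equiv> cs_one A"

lemma zero_in: "z \<in> C" and one_in: "e1 \<in> C"
  and add_in: "a \<in> C \<Longrightarrow> b \<in> C \<Longrightarrow> ad a b \<in> C"
  and mult_in: "a \<in> C \<Longrightarrow> b \<in> C \<Longrightarrow> mu a b \<in> C"
  and smult_in: "a \<in> C \<Longrightarrow> sm k a \<in> C"
  and star_in: "a \<in> C \<Longrightarrow> st a \<in> C"
  using U unfolding unital_cstar_alg_def cs_closed_def Let_def by auto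

lemma add_assoc: "a \<in> C \<Longrightarrow> b \<in> C \<Longrightarrow> c \<in> C \<Longrightarrow> ad (ad a b) c = ad a (ad b c)"
  and add_comm: "a \<in> C \<Longrightarrow> b \<in> C \<Longrightarrow> ad a b = ad b a"
  and add_zero: "a \<in> C \<Longrightarrow> ad a z = a"
  and add_neg: "a \<in> C \<Longrightarrow> ad a (sm (-1) a) = z"
  and smult_one: "a \<in> C \<Longrightarrow> sm 1 a = a"
  and smult_smult: "a \<in> C \<Longrightarrow> sm k (sm l a) = sm (k * l) a"
  and smult_dist1: "a \<in> C \<Longrightarrow> sm (k + l) a = ad (sm k a) (sm l a)"
  and smult_dist2: "a \<in> C \<Longrightarrow> b \<in> C \<Longrightarrow> sm k (ad a b) = ad (sm k a) (sm k b)"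
  using U unfolding unital_cstar_alg_def cs_vector_space_def Let_def by auto

lemma mult_assoc: "a \<in> C \<Longrightarrow> b \<in> C \<Longrightarrow> c \<in> C \<Longrightarrow> mu (mu a b) c = mu a (mu b c)"
  and distL: "a \<in> C \<Longrightarrow> b \<in> C \<Longrightarrow> c \<in> C \<Longrightarrow> mu a (ad b c) = ad (mu a b) (mu a c)"
  and distR: "a \<in> C \<Longrightarrow> b \<in> C \<Longrightarrow> c \<in> C \<Longrightarrow> mu (ad a b) c = ad (mu a c) (mu b c)"
  and mult_smL: "a \<in> C \<Longrightarrow> b \<in> C \<Longrightarrow> mu (sm k a) b = sm k (mu a b)"
  and mult_smR: "a \<in> C \<Longrightarrow> b \<in> C \<Longrightarrow> mu a (sm k b) = sm k (mu a b)"
  and one_mult: "a \<in> C \<Longrightarrow> mu e1 a = a"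
  and mult_one: "a \<in> C \<Longrightarrow> mu a e1 = a"
  using U unfolding unital_cstar_alg_def cs_unital_algebra_def Let_def by auto

lemma star_star: "a \<in> C \<Longrightarrow> st (st a) = a"
  and star_smult: "a \<in> C \<Longrightarrow> st (sm k a) = sm (cnj k) (st a)"
  and star_mult: "a \<in> C \<Longrightarrow> b \<in> C \<Longrightarrow> st (mu a b) = mu (st b) (st a)"
  using U unfolding unital_cstar_alg_def cs_involution_def Let_def by auto

lemma normax: "cs_cstar_norm A" using U unfolding unital_cstar_alg_def by simp

lemma nm_nonneg: "a \<in> C \<Longrightarrow> 0 \<le> nm a"
  using normax unfolding cs_cstar_norm_def Let_def by (elim conjE) blast
lemma nm_zero: "a \<in> C \<Longrightarrow> nm a = 0 \<longleftrightarrow> a = z"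
  using normax unfolding cs_cstar_norm_def Let_def by (elim conjE) blast
lemma nm_smult: "a \<in> C \<Longrightarrow> nm (sm k a) = cmod k * nm a"
  using normax unfolding cs_cstar_norm_def Let_def by (elim conjE) blast
lemma nm_tri: "a \<in> C \<Longrightarrow> b \<in> C \<Longrightarrow> nm (ad a b) \<le> nm a + nm b"
  using normax unfolding cs_cstar_norm_def Let_def by (elim conjE) blast
lemma nm_mult: "a \<in> C \<Longrightarrow> b \<in> C \<Longrightarrow> nm (mu a b) \<le> nm a * nm b"
  using normax unfolding cs_cstar_norm_def Let_def by (elim conjE) blast
lemma complete_ax: "\<forall>X::nat \<Rightarrow> 'a. (\<forall>n. X n \<in> C) \<and> (\<forall>e>0. \<exists>N. \<forall>m\<ge>N. \<forall>n\<ge>N. nm (cs_diff A (X m) (X n)) < e)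
        \<longrightarrow> (\<exists>L\<in>C. \<forall>e>0. \<exists>N. \<forall>n\<ge>N. nm (cs_diff A (X n) L) < e)"
  using normax unfolding cs_cstar_norm_def Let_def by (elim conjE) assumption

lemma complete: "(\<forall>n::nat. X n \<in> C) \<Longrightarrow> (\<forall>e>0. \<exists>N. \<forall>m\<ge>N. \<forall>n\<ge>N. nm (cs_diff A (X m) (X n)) < e)
        \<Longrightarrow> (\<exists>L\<in>C. \<forall>e>0. \<exists>N. \<forall>n\<ge>N. nm (cs_diff A (X n) L) < e)"
  using complete_ax by blast

lemma one_ne_zero: "e1 \<noteq> z"
  using U unfolding unital_cstar_alg_def by auto

lemma diff_in: "a \<in> C \<Longrightarrow> b \<in> C \<Longrightarrow> cs_diff A a b \<in> C"
  by (simp add: cs_diff_def add_in smult_in)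

lemma smult_zero_scalar: "a \<in> C \<Longrightarrow> sm 0 a = z"
  using nm_smult[of a 0] nm_zero[of "sm 0 a"] smult_in[of a 0] by simp

lemma mult_zeroR: "a \<in> C \<Longrightarrow> mu a z = z"
proof -
  assume a: "a \<in> C"
  have "z = sm 0 z" using smult_zero_scalar[OF zero_in] by simp
  then have "mu a z = sm 0 (mu a z)" using mult_smR[OF a zero_in, of 0] by metis
  also have "\<dots> = z" using smult_zero_scalar mult_in[OF a zero_in] by simp
  finally show ?thesis .
qed

lemma zero_add: "a \<in> C \<Longrightarrow> ad z a = a"
  using add_comm[OF zero_in] add_zero by simp

lemma diff_self: "a \<in> C \<Longrightarrow> cs_diff A a a = z"
  by (simp add: cs_diff_def add_neg)

lemma diff_zero_eq: assumes x: "x \<in> C" and y: "y \<in> C" and d: "cs_diff A x y = z"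
  shows "x = y"
proof -
  have ny: "sm (-1) y \<in> C" using smult_in[OF y] .
  have "x = ad x (ad (sm (-1) y) y)"
    using add_comm[OF ny y] add_neg[OF y] add_zero[OF x] by simp
  also have "\<dots> = ad (cs_diff A x y) y" unfolding cs_diff_def using add_assoc[OF x ny y] by simp
  also have "\<dots> = y" using d zero_add[OF y] by simp
  finally show ?thesis .
qed

lemma nm_zero_eq: "x \<in> C \<Longrightarrow> y \<in> C \<Longrightarrow> nm (cs_diff A x y) = 0 \<Longrightarrow> x = y"
  using diff_zero_eq nm_zero diff_in by blast

lemma nm_diff_sym: assumes x: "x \<in> C" and y: "y \<in> C"
  shows "nm (cs_diff A x y) = nm (cs_diff A y x)"
proof -
  have "sm (-1) (cs_diff A x y) = ad (sm (-1) x) (sm ((-1)*(-1)) y)"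
    unfolding cs_diff_def using smult_dist2[OF x smult_in[OF y]] smult_smult[OF y] by simp
  also have "\<dots> = cs_diff A y x" unfolding cs_diff_def using smult_one[OF y]
    add_comm[OF smult_in[OF x] y] by simp
  finally have "nm (cs_diff A y x) = nm (sm (-1) (cs_diff A x y))" by simp
  also have "\<dots> = nm (cs_diff A x y)" using nm_smult[OF diff_in[OF x y]] by simp
  finally show ?thesis by simp
qed

lemma smult_one_inj: assumes "sm c e1 = sm d e1" shows "c = d"
proof -
  have "cs_diff A (sm c e1) (sm d e1) = sm (c - d) e1"
    unfolding cs_diff_def using smult_smult[OF one_in, of "-1" d] smult_dist1[OF one_in, of c "-d"]
    by simp
  then have "nm (sm (c - d) e1) = 0" using assms diff_self[OF smult_in[OF one_in]] nm_zero[OF zero_in]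
    by simp
  then have "cmod (c - d) * nm e1 = 0" using nm_smult[OF one_in] by simp
  moreover have "nm e1 \<noteq> 0" using nm_zero[OF one_in] one_ne_zero by simp
  ultimately show ?thesis by simp
qed

lemma nm_one_pos: "nm e1 > 0"
  using nm_zero[OF one_in] one_ne_zero nm_nonneg[OF one_in] by force

end

primrec pw :: "'a cstar_alg \<Rightarrow> 'a \<Rightarrow> nat \<Rightarrow> 'a" where
  "pw A b 0 = cs_one A" | "pw A b (Suc m) = cs_mult A b (pw A b m)"
primrec ps :: "'a cstar_alg \<Rightarrow> 'a \<Rightarrow> nat \<Rightarrow> 'a" where
  "ps A b 0 = cs_zero A" | "ps A b (Suc m) = cs_add A (ps A b m) (pw A b m)"

context ucs begin

lemma pw_in: "b \<in> C \<Longrightarrow> pw A b m \<in> C"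
  by (induction m) (auto simp: one_in mult_in)

lemma ps_in: "b \<in> C \<Longrightarrow> ps A b m \<in> C"
  by (induction m) (auto simp: zero_in add_in pw_in)

lemma pw_norm: assumes b: "b \<in> C" shows "nm (pw A b m) \<le> nm e1 * nm b ^ m"
proof (induction m)
  case 0 then show ?case by simp
next
  case (Suc m)
  have "nm (pw A b (Suc m)) \<le> nm b * nm (pw A b m)" using nm_mult[OF b pw_in[OF b]] by simp
  also have "\<dots> \<le> nm b * (nm e1 * nm b ^ m)"
    using Suc nm_nonneg[OF b] by (simp add: mult_left_mono)
  finally show ?case by (simp add: algebra_simps)
qed

lemma nm_zero0: "nm z = 0" using nm_zero[OF zero_in] by simp

lemma ac3: "x \<in> C \<Longrightarrow> y \<in> C \<Longrightarrow> w \<in> C \<Longrightarrow> ad (ad x y) w = ad (ad x w) y"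
  by (metis add_assoc add_comm)

lemma ps_diff: assumes b: "b \<in> C" and r: "nm b < 1"
  shows "nm (cs_diff A (ps A b (n + k)) (ps A b n)) \<le> nm e1 * (nm b ^ n - nm b ^ (n + k)) / (1 - nm b)"
proof (induction k)
  case 0 then show ?case by (simp add: diff_self ps_in[OF b] nm_zero0)
next
  case (Suc k)
  let ?r = "nm b"
  have eq: "cs_diff A (ps A b (n + Suc k)) (ps A b n) = ad (cs_diff A (ps A b (n + k)) (ps A b n)) (pw A b (n + k))"
    unfolding cs_diff_def using ac3[OF ps_in[OF b] pw_in[OF b] smult_in[OF ps_in[OF b]]] by simp
  have "nm (cs_diff A (ps A b (n + Suc k)) (ps A b n)) \<le> nm (cs_diff A (ps A b (n + k)) (ps A b n)) + nm (pw A b (n + k))"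
    unfolding eq by (rule nm_tri) (auto simp: diff_in ps_in pw_in b)
  also have "\<dots> \<le> nm e1 * (?r ^ n - ?r ^ (n + k)) / (1 - ?r) + nm e1 * ?r ^ (n + k)"
    using Suc pw_norm[OF b] by (meson add_mono)
  also have "\<dots> = nm e1 * (?r ^ n - ?r ^ (n + Suc k)) / (1 - ?r)"
    using r by (simp add: field_simps)
  finally show ?case .
qed

lemma ps_cauchy: assumes b: "b \<in> C" and r: "nm b < 1"
  shows "\<forall>e>0. \<exists>N. \<forall>m\<ge>N. \<forall>n\<ge>N. nm (cs_diff A (ps A b m) (ps A b n)) < e"
proof (intro allI impI)
  fix e :: real assume e: "e > 0"
  let ?r = "nm b"
  have r0: "0 \<le> ?r" using nm_nonneg[OF b] .
  have e1p: "nm e1 > 0" using nm_one_pos .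
  have lim: "(\<lambda>n. ?r ^ n) \<longlonglongrightarrow> 0" using LIMSEQ_realpow_zero[OF r0 r] .
  have pos: "e * (1 - ?r) / nm e1 > 0" using e r e1p by simp
  obtain N where N0: "\<forall>n\<ge>N. norm (?r ^ n - 0) < e * (1 - ?r) / nm e1"
    using LIMSEQ_D[OF lim pos] by blast
  have N: "?r ^ n < e * (1 - ?r) / nm e1" if "n \<ge> N" for n
    using N0 that r0 by simp
  have bnd: "nm (cs_diff A (ps A b m) (ps A b n)) < e" if H: "n \<le> m" "N \<le> n" for m n
  proof -
    obtain k where m: "m = n + k" using le_Suc_ex[OF H(1)] by blast
    have "nm (cs_diff A (ps A b m) (ps A b n)) \<le> nm e1 * (?r ^ n - ?r ^ (n + k)) / (1 - ?r)"
      using ps_diff[OF b r] m by simp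
    also have "\<dots> \<le> nm e1 * ?r ^ n / (1 - ?r)"
    proof (rule divide_right_mono)
      show "nm e1 * (?r ^ n - ?r ^ (n + k)) \<le> nm e1 * ?r ^ n"
        using e1p r0 by (intro mult_left_mono) auto
    qed (use r in simp)
    also have "\<dots> < e"
    proof -
      have "?r ^ n * nm e1 < e * (1 - ?r)" using N[OF H(2)] e1p by (simp add: pos_less_divide_eq)
      moreover have "1 - ?r > 0" using r by simp
      ultimately show ?thesis by (simp only: pos_divide_less_eq mult.commute)
    qed
    finally show ?thesis .
  qed
  show "\<exists>N. \<forall>m\<ge>N. \<forall>n\<ge>N. nm (cs_diff A (ps A b m) (ps A b n)) < e"
  proof (intro exI allI impI)
    fix m n assume "N \<le> m" "N \<le> n"
    then show "nm (cs_diff A (ps A b m) (ps A b n)) < e"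
    proof (cases "n \<le> m")
      case True then show ?thesis using bnd \<open>N \<le> n\<close> by blast
    next
      case False
      then have "nm (cs_diff A (ps A b n) (ps A b m)) < e" using bnd \<open>N \<le> m\<close> by simp
      then show ?thesis using nm_diff_sym[OF ps_in[OF b] ps_in[OF b], of m n] by simp
    qed
  qed
qed

lemma mult_neg1: "x \<in> C \<Longrightarrow> y \<in> C \<Longrightarrow> mu (sm (-1) x) y = sm (-1) (mu x y)"
  by (simp add: mult_smL)

lemma ps_ident: assumes b: "b \<in> C"
  shows "mu (cs_diff A e1 b) (ps A b m) = cs_diff A e1 (pw A b m)"
proof (induction m)
  case 0 then show ?case
    using mult_zeroR[OF diff_in[OF one_in b]] diff_self[OF one_in] by simp
next
  case (Suc m)
  let ?D = "cs_diff A e1 b" and ?S = "ps A b m" and ?P = "pw A b m"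
  have D: "?D \<in> C" using diff_in[OF one_in b] .
  have S: "?S \<in> C" and P: "?P \<in> C" using ps_in[OF b] pw_in[OF b] by auto
  have Q: "mu b ?P \<in> C" using mult_in[OF b P] .
  have "mu ?D ?P = ad ?P (sm (-1) (mu b ?P))"
    unfolding cs_diff_def using distR[OF one_in smult_in[OF b] P] one_mult[OF P] mult_neg1[OF b P]
    by simp
  then have "mu ?D (ps A b (Suc m)) = ad (ad e1 (sm (-1) ?P)) (ad ?P (sm (-1) (mu b ?P)))"
    using distL[OF D S P] Suc by (simp add: cs_diff_def)
  also have "\<dots> = ad e1 (ad (ad (sm (-1) ?P) ?P) (sm (-1) (mu b ?P)))"
    by (simp add: add_assoc one_in smult_in P Q add_in)
  also have "\<dots> = ad e1 (sm (-1) (mu b ?P))"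
    using add_comm[OF smult_in[OF P] P] add_neg[OF P] zero_add[OF smult_in[OF Q]] by simp
  finally show ?case by (simp add: cs_diff_def)
qed

lemma neumann: assumes b: "b \<in> C" and r: "nm b < 1"
  shows "\<exists>L\<in>C. mu (cs_diff A e1 b) L = e1"
proof -
  obtain L where L: "L \<in> C" and lim: "\<And>e. e > 0 \<Longrightarrow> \<exists>N. \<forall>n\<ge>N. nm (cs_diff A (ps A b n) L) < e"
    using complete[of "ps A b"] ps_cauchy[OF b r] ps_in[OF b] by blast
  let ?D = "cs_diff A e1 b"
  have D: "?D \<in> C" using diff_in[OF one_in b] .
  let ?E = "cs_diff A (mu ?D L) e1"
  have DL: "mu ?D L \<in> C" using mult_in[OF D L] .
  have key: "nm ?E \<le> nm ?D * nm (cs_diff A L (ps A b m)) + nm (pw A b m)" for m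
  proof -
    let ?S = "ps A b m" and ?P = "pw A b m"
    have S: "?S \<in> C" and P: "?P \<in> C" using ps_in[OF b] pw_in[OF b] by auto
    have N1: "sm (-1) e1 \<in> C" using smult_in[OF one_in] .
    have "mu ?D (cs_diff A L ?S) = ad (mu ?D L) (sm (-1) (mu ?D ?S))"
      unfolding cs_diff_def[of A L] using distL[OF D L smult_in[OF S]] mult_smR[OF D S] by simp
    also have "\<dots> = ad (mu ?D L) (ad (sm (-1) e1) ?P)"
    proof -
      have PI: "mu ?D ?S = ad e1 (sm (-1) ?P)" using ps_ident[OF b, of m] by (simp add: cs_diff_def)
      have "sm (-1) (ad e1 (sm (-1) ?P)) = ad (sm (-1) e1) ?P"
        using smult_dist2[OF one_in smult_in[OF P]] smult_smult[OF P] smult_one[OF P] by simp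
      then show ?thesis using PI by simp
    qed
    finally have eq1: "mu ?D (cs_diff A L ?S) = ad (mu ?D L) (ad (sm (-1) e1) ?P)" .
    have "ad (mu ?D (cs_diff A L ?S)) (sm (-1) ?P) = ad (mu ?D L) (ad (sm (-1) e1) (ad ?P (sm (-1) ?P)))"
      unfolding eq1 by (simp add: add_assoc DL N1 P smult_in add_in)
    also have "\<dots> = ?E" using add_neg[OF P] add_zero[OF N1] by (simp add: cs_diff_def)
    finally have eq2: "?E = ad (mu ?D (cs_diff A L ?S)) (sm (-1) ?P)" by simp
    have "nm ?E \<le> nm (mu ?D (cs_diff A L ?S)) + nm (sm (-1) ?P)"
      unfolding eq2 by (rule nm_tri) (auto simp: mult_in D diff_in L S smult_in P)
    also have "\<dots> \<le> nm ?D * nm (cs_diff A L ?S) + nm ?P"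
      using nm_mult[OF D diff_in[OF L S]] nm_smult[OF P] by simp
    finally show ?thesis .
  qed
  have "nm ?E \<le> e" if e: "e > 0" for e
  proof -
    let ?r = "nm b"
    have r0: "0 \<le> ?r" using nm_nonneg[OF b] .
    have D0: "0 \<le> nm ?D" using nm_nonneg[OF D] .
    have e2: "e / 2 / (nm ?D + 1) > 0" using e D0 by simp
    obtain N1 where N1: "\<forall>n\<ge>N1. nm (cs_diff A (ps A b n) L) < e / 2 / (nm ?D + 1)"
      using lim[OF e2] by blast
    have "(\<lambda>n. ?r ^ n) \<longlonglongrightarrow> 0" using LIMSEQ_realpow_zero[OF r0 r] .
    then have "(\<lambda>n. nm e1 * ?r ^ n) \<longlonglongrightarrow> 0" using tendsto_mult_right_zero by blast
    then obtain N2 where N2: "\<forall>n\<ge>N2. norm (nm e1 * ?r ^ n) < e / 2"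
      using LIMSEQ_D[of _ 0 "e/2"] e by force
    let ?m = "max N1 N2"
    have a1: "nm (cs_diff A L (ps A b ?m)) < e / 2 / (nm ?D + 1)"
      using N1 nm_diff_sym[OF L ps_in[OF b]] by simp
    have "nm ?D * nm (cs_diff A L (ps A b ?m)) \<le> nm ?D * (e / 2 / (nm ?D + 1))"
      by (rule mult_left_mono[OF less_imp_le[OF a1] D0])
    also have "\<dots> \<le> e / 2" using D0 e by (simp add: field_simps)
    finally have a2: "nm ?D * nm (cs_diff A L (ps A b ?m)) \<le> e / 2" .
    have "norm (nm e1 * ?r ^ ?m) < e / 2" using N2 by simp
    moreover have "nm e1 * ?r ^ ?m \<le> norm (nm e1 * ?r ^ ?m)" by (rule real_norm_def[THEN eq_refl[OF sym], THEN order_trans[OF abs_ge_self]])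
    ultimately have a3: "nm (pw A b ?m) < e / 2"
      using pw_norm[OF b, of ?m] by linarith
    show ?thesis using key[of ?m] a2 a3 by simp
  qed
  then have "nm ?E \<le> 0" by (meson dense not_le)
  then have "nm ?E = 0" using nm_nonneg[OF diff_in[OF DL one_in]] by simp
  then have "mu ?D L = e1" using nm_zero_eq[OF DL one_in] by simp
  then show ?thesis using L by blast
qed

lemma char_bound:
  assumes fadd: "\<forall>a\<in>C. \<forall>b\<in>C. f (ad a b) = f a + f b"
    and fmul: "\<forall>a\<in>C. \<forall>b\<in>C. f (mu a b) = f a * f b"
    and fsm: "\<forall>k. \<forall>a\<in>C. f (sm k a) = k * f a"
    and fone: "f e1 = 1"
    and b: "b \<in> C"
  shows "cmod (f b) \<le> nm b"
proof (rule ccontr)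
  assume "\<not> cmod (f b) \<le> nm b"
  then have lt: "nm b < cmod (f b)" by simp
  then have l0: "f b \<noteq> 0" using nm_nonneg[OF b] by auto
  let ?b = "sm (1 / f b) b"
  have b': "?b \<in> C" using smult_in[OF b] .
  have "f ?b = 1" using fsm b l0 by simp
  have "nm ?b = nm b / cmod (f b)" using nm_smult[OF b] by (simp add: norm_divide)
  also have "\<dots> < 1" using lt l0 by simp
  finally obtain L where L: "L \<in> C" and inv: "mu (cs_diff A e1 ?b) L = e1"
    using neumann[OF b'] by blast
  have "f (cs_diff A e1 ?b) = 0"
    unfolding cs_diff_def using fadd fsm one_in b' smult_in[OF b'] \<open>f ?b = 1\<close> fone by simp
  moreover have "f e1 = f (cs_diff A e1 ?b) * f L"
    using inv fmul diff_in[OF one_in b'] L by (metis)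
  ultimately have "f e1 = 0" by simp
  then show False using fone by simp
qed

end

definition chi :: "'a cstar_alg \<Rightarrow> ('a \<Rightarrow> real \<Rightarrow> 'g \<Rightarrow> 'a) \<Rightarrow> 'g \<Rightarrow> 'a \<Rightarrow> complex" where
  "chi A \<psi> g a = (SOME c. \<psi> a 0 g = cs_smult A c (cs_one A))"

definition shf :: "((nat \<Rightarrow> real) \<times> (nat \<Rightarrow> 'g)) \<Rightarrow> ((nat \<Rightarrow> real) \<times> (nat \<Rightarrow> 'g))" where
  "shf x = (\<lambda>i. fst x (Suc i), \<lambda>i. snd x (Suc i))"

primrec Phi :: "'a cstar_alg \<Rightarrow> ('a \<Rightarrow> real \<Rightarrow> 'g \<Rightarrow> 'a) \<Rightarrow> nat \<Rightarrow> 'a \<Rightarrow> ((nat \<Rightarrow> real) \<times> (nat \<Rightarrow> 'g)) \<Rightarrow> complex" where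
  "Phi A \<psi> 0 a x = chi A \<psi> (snd x 0) a"
| "Phi A \<psi> (Suc n) a x = Phi A \<psi> n (\<psi> a (1 - fst x 0) (snd x 0)) (shf x)"

lemma reps_shf: "x \<in> join_reps (Suc (Suc n)) \<Longrightarrow> shf x \<in> join_reps (Suc n)"
  unfolding join_reps_def shf_def by (auto split: prod.splits)

lemma reps_t0: "x \<in> join_reps (Suc (Suc n)) \<Longrightarrow> 1 - fst x 0 \<in> {0..1}"
  unfolding join_reps_def by (auto split: prod.splits)

lemma cont_fst_i: "continuous_on S (\<lambda>y::(nat\<Rightarrow>real)\<times>(nat\<Rightarrow>'g::topological_space). fst y i)"
proof -
  have "continuous_on UNIV (\<lambda>y::(nat\<Rightarrow>real)\<times>(nat\<Rightarrow>'g). fst y i)"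
    using continuous_on_compose2[OF continuous_on_product_coordinates[of i] continuous_on_fst[OF continuous_on_id]]
    by simp
  then show ?thesis using continuous_on_subset by blast
qed

lemma cont_snd_i: "continuous_on S (\<lambda>y::(nat\<Rightarrow>real)\<times>(nat\<Rightarrow>'g::topological_space). snd y i)"
proof -
  have "continuous_on UNIV (\<lambda>y::(nat\<Rightarrow>real)\<times>(nat\<Rightarrow>'g). snd y i)"
    using continuous_on_compose2[OF continuous_on_product_coordinates[of i] continuous_on_snd[OF continuous_on_id]]
    by simp
  then show ?thesis using continuous_on_subset by blast
qed

lemma cont_shf: "continuous_on S (shf :: (nat\<Rightarrow>real)\<times>(nat\<Rightarrow>'g::topological_space) \<Rightarrow> _)"
  unfolding shf_def
  by (intro continuous_on_Pair continuous_on_coordinatewise_then_product cont_fst_i cont_snd_i)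

lemma shf_act: "shf (join_act (Suc (Suc n)) h x) = join_act (Suc n) h (shf x)"
  unfolding shf_def join_act_def by auto

context ucs begin

lemma star_one: "st e1 = e1"
proof -
  have s1: "st e1 \<in> C" using star_in[OF one_in] .
  have "st e1 = mu (st e1) e1" using mult_one[OF s1] by simp
  then have "st (st e1) = st (mu (st e1) e1)" by simp
  also have "\<dots> = mu (st e1) (st (st e1))" using star_mult[OF s1 one_in] by simp
  also have "\<dots> = st e1" using star_star[OF one_in] mult_one[OF s1] by simp
  finally show ?thesis using star_star[OF one_in] by simp
qed

lemma nm_diff_scalars: "nm (cs_diff A (sm c e1) (sm d e1)) = cmod (c - d) * nm e1"
proof -
  have "cs_diff A (sm c e1) (sm d e1) = sm (c - d) e1"
    unfolding cs_diff_def using smult_smult[OF one_in, of "-1" d] smult_dist1[OF one_in, of c "-d"]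
    by simp
  then show ?thesis using nm_smult[OF one_in] by simp
qed

lemma cs_cont_compose:
  assumes F: "cs_continuous_on A S F" and FC: "\<forall>p\<in>S. F p \<in> C"
    and m: "continuous_on R m" and mR: "m ` R \<subseteq> S" and x: "x \<in> R" and e: "e > 0"
  shows "eventually (\<lambda>y. nm (cs_diff A (F (m y)) (F (m x))) < e) (at x within R)"
proof -
  let ?p = "m x"
  have p: "?p \<in> S" using mR x by auto
  have "eventually (\<lambda>q. nm (cs_diff A (F q) (F ?p)) < e) (at ?p within S)"
    using F p e unfolding cs_continuous_on_def by blast
  then obtain U where U: "open U" "?p \<in> U" and UP: "\<forall>q\<in>U. q \<in> S \<longrightarrow> q \<noteq> ?p \<longrightarrow> nm (cs_diff A (F q) (F ?p)) < e"
    unfolding eventually_at_topological by blast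
  have Pp: "nm (cs_diff A (F ?p) (F ?p)) < e" using diff_self FC p nm_zero0 e by simp
  have "(m \<longlongrightarrow> m x) (at x within R)" using m x unfolding continuous_on_def by blast
  then have ev1: "eventually (\<lambda>y. m y \<in> U) (at x within R)" using topological_tendstoD U by blast
  have ev2: "eventually (\<lambda>y. y \<in> R) (at x within R)" by (simp add: eventually_at_filter)
  show ?thesis
    using eventually_conj[OF ev1 ev2]
  proof (rule eventually_mono)
    fix y assume "m y \<in> U \<and> y \<in> R"
    then show "nm (cs_diff A (F (m y)) (F (m x))) < e" using UP Pp mR by (cases "m y = ?p") auto
  qed
qed

end

locale ejh = ucs A for A :: "'a cstar_alg" +
  fixes \<alpha> :: "'g::topological_group_add \<Rightarrow> 'a \<Rightarrow> 'a" and \<psi> :: "'a \<Rightarrow> real \<Rightarrow> 'g \<Rightarrow> 'a"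
  assumes act: "cstar_action A \<alpha>" and E: "equivariant_join_hom A \<alpha> \<psi>"
begin

lemma psi_mem: "a \<in> C \<Longrightarrow> join_alg_mem A (\<psi> a)"
  using E unfolding equivariant_join_hom_def Let_def by blast

lemma psi_in: "a \<in> C \<Longrightarrow> t \<in> {0..1} \<Longrightarrow> \<psi> a t g \<in> C"
  using psi_mem unfolding join_alg_mem_def by blast

lemma psi_cont: "a \<in> C \<Longrightarrow> cs_continuous_on A ({0..1} \<times> UNIV) (\<lambda>(t, g). \<psi> a t g)"
  using psi_mem unfolding join_alg_mem_def by blast

lemma psi_0: "a \<in> C \<Longrightarrow> \<exists>c. \<psi> a 0 g = sm c e1"
  using psi_mem unfolding join_alg_mem_def by blast

lemma psi_1: "a \<in> C \<Longrightarrow> \<psi> a 1 g = \<psi> a 1 h"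
  using psi_mem unfolding join_alg_mem_def by blast

lemma psi_ops: assumes "t \<in> {0..1}" shows
  "\<forall>a\<in>C. \<forall>b\<in>C. \<psi> (ad a b) t g = ad (\<psi> a t g) (\<psi> b t g)"
  "\<forall>a\<in>C. \<forall>b\<in>C. \<psi> (mu a b) t g = mu (\<psi> a t g) (\<psi> b t g)"
  "\<forall>k. \<forall>a\<in>C. \<psi> (sm k a) t g = sm k (\<psi> a t g)"
  "\<forall>a\<in>C. \<psi> (st a) t g = st (\<psi> a t g)"
  "\<psi> e1 t g = e1"
  using E assms unfolding equivariant_join_hom_def Let_def by blast+

lemma psi_equiv: "a \<in> C \<Longrightarrow> t \<in> {0..1} \<Longrightarrow> \<psi> (\<alpha> h a) t g = \<alpha> h (\<psi> a t (g + h))"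
  using E unfolding equivariant_join_hom_def Let_def by blast

lemma alpha_hom: "unital_star_hom A A (\<alpha> h)"
  using act unfolding cstar_action_def by blast

lemma alpha_in: "a \<in> C \<Longrightarrow> \<alpha> h a \<in> C"
  using alpha_hom unfolding unital_star_hom_def Let_def by blast

lemma alpha_scalar: "\<alpha> h (sm c e1) = sm c e1"
  using alpha_hom one_in unfolding unital_star_hom_def Let_def by simp

lemma chi_eq: "a \<in> C \<Longrightarrow> \<psi> a 0 g = sm (chi A \<psi> g a) e1"
  unfolding chi_def using someI_ex[OF psi_0] by blast

lemma chi_unique: "a \<in> C \<Longrightarrow> \<psi> a 0 g = sm c e1 \<Longrightarrow> chi A \<psi> g a = c"
  using chi_eq smult_one_inj by metis

lemma chi_add: "a \<in> C \<Longrightarrow> b \<in> C \<Longrightarrow> chi A \<psi> g (ad a b) = chi A \<psi> g a + chi A \<psi> g b"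
  by (rule chi_unique) (simp_all add: add_in psi_ops(1) chi_eq[of a] chi_eq[of b] smult_dist1 one_in)

lemma chi_mult: "a \<in> C \<Longrightarrow> b \<in> C \<Longrightarrow> chi A \<psi> g (mu a b) = chi A \<psi> g a * chi A \<psi> g b"
  by (rule chi_unique) (simp_all add: mult_in psi_ops(2) chi_eq[of a] chi_eq[of b] mult_smL mult_smR one_in smult_in
      one_mult smult_smult mult.commute)

lemma chi_smult: "a \<in> C \<Longrightarrow> chi A \<psi> g (sm k a) = k * chi A \<psi> g a"
  by (rule chi_unique) (simp_all add: smult_in psi_ops(3) chi_eq[of a] one_in smult_smult)

lemma chi_star: "a \<in> C \<Longrightarrow> chi A \<psi> g (st a) = cnj (chi A \<psi> g a)"
  by (rule chi_unique) (simp_all add: star_in psi_ops(4) chi_eq[of a] one_in star_smult star_one)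

lemma chi_one: "chi A \<psi> g e1 = 1"
  by (rule chi_unique) (simp_all add: one_in psi_ops(5) smult_one)

lemma chi_equiv: "a \<in> C \<Longrightarrow> chi A \<psi> g (\<alpha> h a) = chi A \<psi> (g + h) a"
  by (rule chi_unique) (simp_all add: alpha_in psi_equiv chi_eq[of a] alpha_scalar)

lemma chi_cont: assumes a: "a \<in> C" shows "continuous_on UNIV (\<lambda>g. chi A \<psi> g a)"
  unfolding continuous_on_def
proof (intro ballI)
  fix g0 :: 'g
  show "((\<lambda>g. chi A \<psi> g a) \<longlongrightarrow> chi A \<psi> g0 a) (at g0 within UNIV)"
    unfolding tendsto_iff
  proof (intro allI impI)
    fix e :: real assume e: "e > 0"
    have ev: "eventually (\<lambda>g. nm (cs_diff A ((\<lambda>(t, g). \<psi> a t g) ((\<lambda>g. (0::real, g)) g))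
                ((\<lambda>(t, g). \<psi> a t g) ((\<lambda>g. (0::real, g)) g0))) < e * nm e1) (at g0 within UNIV)"
      by (rule cs_cont_compose[OF psi_cont[OF a]]) (auto simp: psi_in a nm_one_pos e intro!: continuous_intros)
    show "eventually (\<lambda>g. dist (chi A \<psi> g a) (chi A \<psi> g0 a) < e) (at g0 within UNIV)"
      using ev
    proof (rule eventually_mono)
      fix g assume "nm (cs_diff A ((\<lambda>(t, g). \<psi> a t g) ((\<lambda>g. (0::real, g)) g))
                ((\<lambda>(t, g). \<psi> a t g) ((\<lambda>g. (0::real, g)) g0))) < e * nm e1"
      then have "cmod (chi A \<psi> g a - chi A \<psi> g0 a) * nm e1 < e * nm e1"
        by (simp add: chi_eq[OF a] nm_diff_scalars)
      then show "dist (chi A \<psi> g a) (chi A \<psi> g0 a) < e"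
        using nm_one_pos by (simp add: dist_norm)
    qed
  qed
qed

end

context ejh begin

lemma Phi_hom: "x \<in> join_reps (Suc n) \<Longrightarrow>
  (\<forall>a\<in>C. \<forall>b\<in>C. Phi A \<psi> n (ad a b) x = Phi A \<psi> n a x + Phi A \<psi> n b x) \<and>
  (\<forall>a\<in>C. \<forall>b\<in>C. Phi A \<psi> n (mu a b) x = Phi A \<psi> n a x * Phi A \<psi> n b x) \<and>
  (\<forall>k. \<forall>a\<in>C. Phi A \<psi> n (sm k a) x = k * Phi A \<psi> n a x) \<and>
  (\<forall>a\<in>C. Phi A \<psi> n (st a) x = cnj (Phi A \<psi> n a x)) \<and>
  Phi A \<psi> n e1 x = 1"
proof (induction n arbitrary: x)
  case 0
  then show ?case by (simp add: chi_add chi_mult chi_smult chi_star chi_one)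
next
  case (Suc n)
  let ?s = "1 - fst x 0" and ?g = "snd x 0"
  have s: "?s \<in> {0..1}" using reps_t0[OF Suc.prems] .
  have IH: "(\<forall>a\<in>C. \<forall>b\<in>C. Phi A \<psi> n (ad a b) (shf x) = Phi A \<psi> n a (shf x) + Phi A \<psi> n b (shf x)) \<and>
  (\<forall>a\<in>C. \<forall>b\<in>C. Phi A \<psi> n (mu a b) (shf x) = Phi A \<psi> n a (shf x) * Phi A \<psi> n b (shf x)) \<and>
  (\<forall>k. \<forall>a\<in>C. Phi A \<psi> n (sm k a) (shf x) = k * Phi A \<psi> n a (shf x)) \<and>
  (\<forall>a\<in>C. Phi A \<psi> n (st a) (shf x) = cnj (Phi A \<psi> n a (shf x))) \<and>
  Phi A \<psi> n e1 (shf x) = 1" using Suc.IH[OF reps_shf[OF Suc.prems]] .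
  have pin: "\<And>a. a \<in> C \<Longrightarrow> \<psi> a ?s ?g \<in> C" using psi_in s by blast
  note ops = psi_ops[OF s, of ?g]
  show ?case
  proof (intro conjI ballI allI)
    fix a b assume a: "a \<in> C" and b: "b \<in> C"
    show "Phi A \<psi> (Suc n) (ad a b) x = Phi A \<psi> (Suc n) a x + Phi A \<psi> (Suc n) b x"
      using ops(1) IH a b pin by simp
    show "Phi A \<psi> (Suc n) (mu a b) x = Phi A \<psi> (Suc n) a x * Phi A \<psi> (Suc n) b x"
      using ops(2) IH a b pin by simp
  next
    fix k a assume a: "a \<in> C"
    show "Phi A \<psi> (Suc n) (sm k a) x = k * Phi A \<psi> (Suc n) a x"
      using ops(3) IH a pin by simp
  next
    fix a assume a: "a \<in> C"
    show "Phi A \<psi> (Suc n) (st a) x = cnj (Phi A \<psi> (Suc n) a x)"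
      using ops(4) IH a pin by simp
  next
    show "Phi A \<psi> (Suc n) e1 x = 1" using ops(5) IH by simp
  qed
qed

lemma Phi_diff: "x \<in> join_reps (Suc n) \<Longrightarrow> u \<in> C \<Longrightarrow> v \<in> C \<Longrightarrow>
   Phi A \<psi> n (cs_diff A u v) x = Phi A \<psi> n u x - Phi A \<psi> n v x"
  using Phi_hom[of x n] unfolding cs_diff_def by (simp add: smult_in)

lemma Phi_bound: "x \<in> join_reps (Suc n) \<Longrightarrow> b \<in> C \<Longrightarrow> cmod (Phi A \<psi> n b x) \<le> nm b"
  using Phi_hom[of x n] by (intro char_bound[of "\<lambda>a. Phi A \<psi> n a x"]) auto

lemma Phi_equiv: "x \<in> join_reps (Suc n) \<Longrightarrow> a \<in> C \<Longrightarrow>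
   Phi A \<psi> n (\<alpha> h a) x = Phi A \<psi> n a (join_act (Suc n) h x)"
proof (induction n arbitrary: a x)
  case 0
  then show ?case by (simp add: chi_equiv join_act_def)
next
  case (Suc n)
  let ?s = "1 - fst x 0" and ?g = "snd x 0"
  have s: "?s \<in> {0..1}" using reps_t0[OF Suc.prems(1)] .
  have pin: "\<psi> a ?s (?g + h) \<in> C" using psi_in[OF Suc.prems(2) s] .
  have "Phi A \<psi> (Suc n) (\<alpha> h a) x = Phi A \<psi> n (\<alpha> h (\<psi> a ?s (?g + h))) (shf x)"
    using psi_equiv[OF Suc.prems(2) s] by simp
  also have "\<dots> = Phi A \<psi> n (\<psi> a ?s (?g + h)) (join_act (Suc n) h (shf x))"
    using Suc.IH[OF reps_shf[OF Suc.prems(1)] pin] .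
  also have "\<dots> = Phi A \<psi> (Suc n) a (join_act (Suc (Suc n)) h x)"
    by (simp add: shf_act) (simp add: join_act_def)
  finally show ?case .
qed

lemma Phi_move: "join_move (Suc n) x y \<Longrightarrow> a \<in> C \<Longrightarrow> Phi A \<psi> n a x = Phi A \<psi> n a y"
proof (induction n arbitrary: a x y)
  case 0
  then show ?case unfolding join_move_def by simp
next
  case (Suc n)
  have xr: "x \<in> join_reps (Suc (Suc n))" and yr: "y \<in> join_reps (Suc (Suc n))"
    using Suc.prems(1) unfolding join_move_def by auto
  obtain k where k: "k < Suc n" and
    K: "(fst x = fst y \<and> fst x k = 0 \<and> (\<forall>i. i \<noteq> k \<longrightarrow> snd x i = snd y i)) \<or>
        (fst x k = 1 \<and> fst y k = 1 \<and> (\<forall>i\<le>k. fst x i = fst y i \<and> snd x i = snd y i))"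
    using Suc.prems(1) unfolding join_move_def by auto
  have a: "a \<in> C" using Suc.prems(2) .
  show ?case
  proof (cases k)
    case 0
    from K show ?thesis
    proof
      assume H: "fst x = fst y \<and> fst x k = 0 \<and> (\<forall>i. i \<noteq> k \<longrightarrow> snd x i = snd y i)"
      then have "shf x = shf y" unfolding shf_def using 0 by auto
      moreover have "\<psi> a 1 (snd x 0) = \<psi> a 1 (snd y 0)" using psi_1[OF a] .
      moreover have "fst y 0 = 0" "fst x 0 = 0" using H 0 by auto
      ultimately show ?thesis by simp
    next
      assume H: "fst x k = 1 \<and> fst y k = 1 \<and> (\<forall>i\<le>k. fst x i = fst y i \<and> snd x i = snd y i)"
      obtain c where c: "\<psi> a 0 (snd x 0) = sm c e1" using psi_0[OF a] by blast
      have hx: "Phi A \<psi> n (sm c e1) (shf x) = c" using Phi_hom[OF reps_shf[OF xr]] one_in by simp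
      have hy: "Phi A \<psi> n (sm c e1) (shf y) = c" using Phi_hom[OF reps_shf[OF yr]] one_in by simp
      show ?thesis using H 0 c hx hy by simp
    qed
  next
    case (Suc k')
    have mv: "join_move (Suc n) (shf x) (shf y)"
      unfolding join_move_def
    proof (intro conjI exI[of _ k'])
      show "shf x \<in> join_reps (Suc n)" "shf y \<in> join_reps (Suc n)" using reps_shf[OF xr] reps_shf[OF yr] by auto
      show "k' < Suc n - 1" using k Suc by simp
      show "fst (shf x) = fst (shf y) \<and> fst (shf x) k' = 0 \<and> (\<forall>i. i \<noteq> k' \<longrightarrow> snd (shf x) i = snd (shf y) i) \<or>
        fst (shf x) k' = 1 \<and> fst (shf y) k' = 1 \<and> (\<forall>i\<le>k'. fst (shf x) i = fst (shf y) i \<and> snd (shf x) i = snd (shf y) i)"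
        using K Suc unfolding shf_def by auto
    qed
    have e0: "fst x 0 = fst y 0 \<and> snd x 0 = snd y 0" using K Suc by auto
    have s: "1 - fst x 0 \<in> {0..1}" using reps_t0[OF xr] .
    have pin: "\<psi> a (1 - fst x 0) (snd x 0) \<in> C" using psi_in[OF a s] .
    show ?thesis using Suc.IH[OF mv pin] e0 by simp
  qed
qed

lemma Phi_cont: "a \<in> C \<Longrightarrow> continuous_on (join_reps (Suc n)) (Phi A \<psi> n a)"
proof (induction n arbitrary: a)
  case 0
  have "continuous_on (join_reps (Suc 0)) (\<lambda>x. chi A \<psi> (snd x 0) a)"
    using continuous_on_compose2[OF chi_cont[OF 0] cont_snd_i[of "join_reps (Suc 0)" 0]] by simp
  then show ?case by simp
next
  case (Suc n)
  have a: "a \<in> C" using Suc.prems .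
  let ?R = "join_reps (Suc (Suc n)) :: ((nat \<Rightarrow> real) \<times> (nat \<Rightarrow> 'g)) set"
  let ?m = "\<lambda>y::(nat \<Rightarrow> real) \<times> (nat \<Rightarrow> 'g). (1 - fst y 0, snd y 0)"
  let ?F = "\<lambda>(t, g). \<psi> a t g"
  have mcont: "continuous_on ?R ?m"
    by (intro continuous_on_Pair continuous_on_diff continuous_on_const cont_fst_i cont_snd_i)
  have mR: "?m ` ?R \<subseteq> {0..1} \<times> UNIV"
  proof (rule image_subsetI)
    fix y assume "y \<in> ?R" then show "?m y \<in> {0..1} \<times> UNIV" using reps_t0[of y n] by simp
  qed
  have FC: "\<forall>p\<in>{0..1} \<times> UNIV. ?F p \<in> C" using psi_in[OF a] by auto
  show ?case
    unfolding continuous_on_def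
  proof (intro ballI)
    fix x0 assume x0: "x0 \<in> ?R"
    let ?bz = "\<psi> a (1 - fst x0 0) (snd x0 0)"
    have b0: "?bz \<in> C" using psi_in[OF a reps_t0[OF x0]] .
    have c1: "continuous_on ?R (\<lambda>y. Phi A \<psi> n ?bz (shf y))"
      using continuous_on_compose2[OF Suc.IH[OF b0] cont_shf] reps_shf by blast
    then have t1: "((\<lambda>y. Phi A \<psi> n ?bz (shf y)) \<longlongrightarrow> Phi A \<psi> n ?bz (shf x0)) (at x0 within ?R)"
      using x0 unfolding continuous_on_def by blast
    show "(Phi A \<psi> (Suc n) a \<longlongrightarrow> Phi A \<psi> (Suc n) a x0) (at x0 within ?R)"
      unfolding tendsto_iff
    proof (intro allI impI)
      fix e :: real assume e: "e > 0"
      have E1: "eventually (\<lambda>y. nm (cs_diff A (?F (?m y)) (?F (?m x0))) < e / 2) (at x0 within ?R)"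
        by (rule cs_cont_compose[OF psi_cont[OF a] FC mcont mR x0]) (use e in simp)
      have E2: "eventually (\<lambda>y. dist (Phi A \<psi> n ?bz (shf y)) (Phi A \<psi> n ?bz (shf x0)) < e / 2) (at x0 within ?R)"
      proof -
        have "e / 2 > 0" using e by simp
        then show ?thesis using t1 unfolding tendsto_iff by blast
      qed
      have E3: "eventually (\<lambda>y. y \<in> ?R) (at x0 within ?R)" by (simp add: eventually_at_filter)
      show "eventually (\<lambda>y. dist (Phi A \<psi> (Suc n) a y) (Phi A \<psi> (Suc n) a x0) < e) (at x0 within ?R)"
        using eventually_conj[OF E1 eventually_conj[OF E2 E3]]
      proof (rule eventually_mono)
        fix y assume H: "nm (cs_diff A (?F (?m y)) (?F (?m x0))) < e / 2 \<and>
          dist (Phi A \<psi> n ?bz (shf y)) (Phi A \<psi> n ?bz (shf x0)) < e / 2 \<and> y \<in> ?R"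
        let ?b = "\<psi> a (1 - fst y 0) (snd y 0)"
        have yR: "y \<in> ?R" using H by blast
        have b: "?b \<in> C" using psi_in[OF a reps_t0[OF yR]] .
        have sy: "shf y \<in> join_reps (Suc n)" using reps_shf[OF yR] .
        have d1: "cmod (Phi A \<psi> n ?b (shf y) - Phi A \<psi> n ?bz (shf y)) < e / 2"
        proof -
          have "cmod (Phi A \<psi> n ?b (shf y) - Phi A \<psi> n ?bz (shf y)) = cmod (Phi A \<psi> n (cs_diff A ?b ?bz) (shf y))"
            by (subst Phi_diff[OF sy b b0]) (rule refl)
          also have "\<dots> \<le> nm (cs_diff A ?b ?bz)" using Phi_bound[OF sy diff_in[OF b b0]] .
          also have "\<dots> < e / 2" using H by simp
          finally show ?thesis .
        qed
        have "dist (Phi A \<psi> (Suc n) a y) (Phi A \<psi> (Suc n) a x0) =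
              dist (Phi A \<psi> n ?b (shf y)) (Phi A \<psi> n ?bz (shf x0))" by simp
        also have "\<dots> \<le> dist (Phi A \<psi> n ?b (shf y)) (Phi A \<psi> n ?bz (shf y)) + dist (Phi A \<psi> n ?bz (shf y)) (Phi A \<psi> n ?bz (shf x0))"
          by (rule dist_triangle)
        also have "\<dots> < e" using d1 H by (simp add: dist_norm)
        finally show "dist (Phi A \<psi> (Suc n) a y) (Phi A \<psi> (Suc n) a x0) < e" .
      qed
    qed
  qed
qed

end

theorem mainTheorem3:
  fixes A :: "'a cstar_alg"
    and \<alpha> :: "'g::{topological_group_add, t2_space} \<Rightarrow> 'a \<Rightarrow> 'a"
    and \<psi> :: "'a \<Rightarrow> real \<Rightarrow> 'g \<Rightarrow> 'a"
  assumes "compact (UNIV :: 'g set)"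
    and "unital_cstar_alg A"
    and "cstar_action A \<alpha>"
    and "equivariant_join_hom A \<alpha> \<psi>"
  shows "\<forall>n::nat. n \<ge> 1 \<longrightarrow> (\<exists>\<phi>. equivariant_join_power_hom A \<alpha> n \<phi>)"
proof (intro allI impI)
  fix n :: nat assume n: "n \<ge> 1"
  interpret ejh A \<alpha> \<psi> by unfold_locales (use assms in auto)
  obtain m where m: "n = Suc m" using n by (cases n) auto
  show "\<exists>\<phi>. equivariant_join_power_hom A \<alpha> n \<phi>"
  proof (rule exI[of _ "Phi A \<psi> m"])
    show "equivariant_join_power_hom A \<alpha> n (Phi A \<psi> m)"
      unfolding equivariant_join_power_hom_def Let_def C_join_def m
      using Phi_cont Phi_move Phi_hom Phi_equiv by auto
  qed
qed

end
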